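(* Consider online multiclass classification with an arbitrary feedback graph and let $\kappa=\tfrac12$. For each round $t$ let $\ell_t$ be the multiclass hinge loss defined below and $a(\mathbf{W}_t,\mathbf{x}_t)=\ell^{(t)}(\mathbf{W}_t,y_t^\star)$. Then Gappletron (with any $\gamma\ge0$ and any OCO algorithm) satisfies for every $t$ $$\sum_{y\in[K]}p_t'(y)\mathbb{1}[y\ne y_t]\le\max\Big\{\frac23,\frac{K-1}{K}\Big\}\ell_t(\mathbf{W}_t)+\gamma_t.$$ Furthermore, $\ell_t$ satisfies $\|\nabla\ell_t(\mathbf{W}_t)\|_2^2\le4\|\mathbf{x}_t\|_2^2\,\ell_t(\mathbf{W}_t)$.
   Context: Setting: for $t=1,\dots,T$ an oblivious adversary fixes $\mathbf{x}_t\in\mathbb{R}^d$ and $y_t\in[K]$; the learner predicts $y_t'\in[K]$. A feedback graph is a directed graph $([K],\mathcal{E})$ where every node has an incoming edge; $\mathrm{out}(y')=\{y:(y',y)\in\mathcal{E}\}$; predicting $y_t'$ reveals $(y,\mathbb{1}[y\ne y_t])$ for $y\in\mathrm{out}(y_t')$ (a node with $K-1$ outgoing edges gets the missing edge added). $\mathcal{Q}=\{y':\mathrm{out}(y')=[K]\}$; $S$ is a minimum dominating set (every $y$ lies in $\mathrm{out}(y')$ for some $y'\in S$), $\rho=|S|$. Gappletron (inputs $\mathcal{Q}$, $S$, OCO algorithm $\mathcal{A}$ over matrices $\mathbf{W}\in\mathbb{R}^{K\times d}$ with rows $\mathbf{W}^k$, $\gamma\ge0$, gap map $a$ into $[0,1]$):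 at round $t$: $y_t^\star=\arg\max_k\langle\mathbf{W}_t^k,\mathbf{x}_t\rangle$; $\gamma_t=0$ if $y_t^\star\in\mathcal{Q}$, else $\gamma_t=\min\{\tfrac12,\gamma/\sqrt{|\{s\le t:y_s^\star\notin\mathcal{Q}\}|}\}$; $a_t=a(\mathbf{W}_t,\mathbf{x}_t)$; $\zeta_t=\mathbb{1}[\gamma_t\le a_t]$; $\mathbf{p}_t'=(1-\zeta_ta_t-(1-\zeta_t)\gamma_t)\mathbf{e}_{y_t^\star}+\zeta_ta_t\frac1K\mathbf{1}+(1-\zeta_t)\frac{\gamma_t}{\rho}\mathbf{1}_S$; predict $y_t'\sim\mathbf{p}_t'$; the importance-weighted loss $v_t\ell_t$ with $v_t=\mathbb{1}[y_t\in\mathrm{out}(y_t')]/P_t(y_t\in\mathrm{out}(y_t'))$ is fed to $\mathcal{A}$, which returns $\mathbf{W}_{t+1}$. Multiclass hinge loss: $m_t(\mathbf{W},y)=\langle\mathbf{W}^y,\mathbf{x}_t\rangle-\max_{k\ne y}\langle\mathbf{W}^k,\mathbf{x}_t\rangle$, $m_t^\star=\max_k m_t(\mathbf{W}_t,k)$ (computed at the current iterate $\mathbf{W}_t$). For $y\in[K]$ define $\ell^{(t)}(\mathbf{W},y)=0$ if $y=y_t^\star$ and $m_t^\star\ge\kappa$, and $\ell^{(t)}(\mathbf{W},y)=\max\{1-m_t(\mathbf{W},y),0\}$ otherwise; $\ell_t(\mathbf{W})=\ell^{(t)}(\mathbf{W},y_t)$. The gradient $\nabla\ell_t$ is with respect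 to $\mathbf{W}$ viewed as a vector in $\mathbb{R}^{Kd}$ (a subgradient where not differentiable), with the Euclidean norm. *)

theory Defs
  imports "HOL-Analysis.Analysis"
begin

text \<open>Labels are the elements of a finite type 'k (so [K] = UNIV, K = CARD('k));
  features live in real^'d; a weight matrix W has rows W $ k :: real^'d, and
  real^'d^'k is the Euclidean space R^{Kd} (norm = Frobenius norm).\<close>

definition score :: "real^'d^'k \<Rightarrow> real^'d \<Rightarrow> 'k \<Rightarrow> real" where
  "score W x k = (W $ k) \<bullet> x"

definition margin :: "real^'d^'k::finite \<Rightarrow> real^'d \<Rightarrow> 'k \<Rightarrow> real" where
  "margin W x y = score W x y - Max {score W x k | k. k \<noteq> y}"

definition mstar :: "real^'d^'k::finite \<Rightarrow> real^'d \<Rightarrow> real" where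
  "mstar W x = Max (range (margin W x))"

text \<open>surrogate loss l^(t)(W,y): Wt is the current iterate, ys the predicted label y_t^*\<close>
definition surr_loss :: "real \<Rightarrow> real^'d^'k::finite \<Rightarrow> real^'d \<Rightarrow> 'k \<Rightarrow> 'k \<Rightarrow> real^'d^'k \<Rightarrow> real" where
  "surr_loss \<kappa> Wt x ys y W =
     (if y = ys \<and> mstar Wt x \<ge> \<kappa> then 0 else max (1 - margin W x y) 0)"

text \<open>feedback graph: out-neighbourhood, with the convention that a node with K-1
  outgoing edges gets the missing edge added\<close>
definition out0 :: "('k \<times> 'k) set \<Rightarrow> 'k \<Rightarrow> 'k set" where
  "out0 E y' = {y. (y', y) \<in> E}"

definition out :: "('k::finite \<times> 'k) set \<Rightarrow> 'k \<Rightarrow> 'k set" where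
  "out E y' = (if card (out0 E y') = CARD('k) - 1 then UNIV else out0 E y')"

definition feedback_graph :: "('k \<times> 'k) set \<Rightarrow> bool" where
  "feedback_graph E \<longleftrightarrow> (\<forall>y. \<exists>y'. (y', y) \<in> E)"

definition Qset :: "('k::finite \<times> 'k) set \<Rightarrow> 'k set" where
  "Qset E = {y'. out E y' = UNIV}"

definition dominating :: "('k::finite \<times> 'k) set \<Rightarrow> 'k set \<Rightarrow> bool" where
  "dominating E S \<longleftrightarrow> (\<forall>y. \<exists>y'\<in>S. y \<in> out E y')"

definition min_dominating :: "('k::finite \<times> 'k) set \<Rightarrow> 'k set \<Rightarrow> bool" where
  "min_dominating E S \<longleftrightarrow> dominating E S \<and> (\<forall>S'. dominating E S' \<longrightarrow> card S \<le> card S')"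

text \<open>Gappletron exploration rate gamma_t (rounds numbered 1,2,...);
  ys s is the argmax label y_s^* of round s\<close>
definition gamma_t :: "real \<Rightarrow> 'k set \<Rightarrow> (nat \<Rightarrow> 'k) \<Rightarrow> nat \<Rightarrow> real" where
  "gamma_t \<gamma> Q ys t =
     (if ys t \<in> Q then 0
      else min (1/2) (\<gamma> / sqrt (real (card {s \<in> {1..t}. ys s \<notin> Q}))))"

text \<open>Gappletron's sampling distribution p_t' given gamma_t, a_t, y_t^* and S\<close>
definition gapp_p :: "real \<Rightarrow> real \<Rightarrow> 'k::finite \<Rightarrow> 'k set \<Rightarrow> 'k \<Rightarrow> real" where
  "gapp_p g a ys S y =
     (let \<zeta> = (if g \<le> a then 1 else 0 :: real) in
        (1 - \<zeta> * a - (1 - \<zeta>) * g) * (if y = ys then 1 else 0)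
        + \<zeta> * a / real CARD('k)
        + (1 - \<zeta>) * g / real (card S) * (if y \<in> S then 1 else 0))"

end

theory Submission
  imports Defs
begin

lemma maxset_eq: "{score W x k | k. k \<noteq> y} = score W x ` (- {y})" by auto

lemma maxset_fin: "finite {score (W::real^'d^'k::finite) x k | k. k \<noteq> y}"
  unfolding maxset_eq by simp

lemma maxset_ne: assumes "CARD('k::finite) \<ge> 2" shows "{score (W::real^'d^'k) x k | k. k \<noteq> y} \<noteq> {}"
proof -
  have "- {y} \<noteq> {}"
  proof
    assume "- {y} = {}" then have "UNIV = {y}" by auto
    then have "CARD('k) = card {y}" by metis
    then have "CARD('k) = 1" by simp
    with assms show False by simp
  qed
  then show ?thesis unfolding maxset_eq by blast
qed

lemma max_ge: "k \<noteq> y \<Longrightarrow> score (W::real^'d^'k::finite) x k \<le> Max {score W x k | k. k \<noteq> y}"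
  by (rule Max_ge[OF maxset_fin]) auto

lemma max_in: assumes "CARD('k::finite) \<ge> 2"
  shows "\<exists>j. j \<noteq> y \<and> Max {score (W::real^'d^'k) x k | k. k \<noteq> y} = score W x j"
proof -
  have "Max {score (W::real^'d^'k) x k | k. k \<noteq> y} \<in> {score W x k | k. k \<noteq> y}"
    by (rule Max_in[OF maxset_fin maxset_ne[OF assms]])
  then show ?thesis by auto
qed

lemma margin_star_nonneg:
  assumes K: "CARD('k::finite) \<ge> 2" and am: "\<forall>k. score (W::real^'d^'k) x k \<le> score W x ys"
  shows "margin W x ys \<ge> 0"
  using max_in[OF K, of ys W x] am unfolding margin_def by auto

lemma margin_other:
  assumes am: "\<forall>k. score (W::real^'d^'k::finite) x k \<le> score W x ys" and "y \<noteq> ys"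
  shows "margin W x y \<le> - margin W x ys"
proof -
  have 1: "score W x ys \<le> Max {score W x k | k. k \<noteq> y}" using max_ge[of ys y] assms(2) by auto
  have 2: "score W x y \<le> Max {score W x k | k. k \<noteq> ys}" using max_ge[of y ys] assms(2) by auto
  show ?thesis using 1 2 unfolding margin_def by linarith
qed

lemma mstar_eq:
  assumes K: "CARD('k::finite) \<ge> 2" and am: "\<forall>k. score (W::real^'d^'k) x k \<le> score W x ys"
  shows "mstar W x = margin W x ys"
  unfolding mstar_def
proof (rule Max_eqI)
  fix z assume "z \<in> range (margin W x)"
  then obtain k where k: "z = margin W x k" by auto
  show "z \<le> margin W x ys"
  proof (cases "k = ys")
    case False
    then show ?thesis using k margin_other[OF am False] margin_star_nonneg[OF K am] by linarith
  qed (simp add: k)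
qed auto

lemma max_diff:
  assumes K: "CARD('k::finite) \<ge> 2"
  shows "\<exists>j. j \<noteq> y \<and> \<bar>Max {score (V::real^'d^'k) x k | k. k \<noteq> y} - Max {score W x k | k. k \<noteq> y}\<bar>
            \<le> \<bar>score V x j - score W x j\<bar>"
proof -
  obtain jv where jv: "jv \<noteq> y" "Max {score V x k | k. k \<noteq> y} = score V x jv" using max_in[OF K] by blast
  obtain jw where jw: "jw \<noteq> y" "Max {score W x k | k. k \<noteq> y} = score W x jw" using max_in[OF K] by blast
  have a: "score W x jv \<le> Max {score W x k | k. k \<noteq> y}" using max_ge jv(1) by blast
  have b: "score V x jw \<le> Max {score V x k | k. k \<noteq> y}" using max_ge jw(1) by blast
  show ?thesis
  proof (cases "Max {score V x k | k. k \<noteq> y} \<ge> Max {score W x k | k. k \<noteq> y}")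
    case True
    then show ?thesis using jv a by (intro exI[of _ jv]) auto
  next
    case False
    then show ?thesis using jw b by (intro exI[of _ jw]) auto
  qed
qed

lemma norm_sq_vec: "(norm (G::real^'d^'k::finite))\<^sup>2 = (\<Sum>i\<in>UNIV. (norm (G $ i))\<^sup>2)"
  by (simp add: power2_norm_eq_inner inner_vec_def)

lemma sq2: "((a::real) + b)\<^sup>2 \<le> 2 * (a\<^sup>2 + b\<^sup>2)"
proof -
  have "0 \<le> (a - b)\<^sup>2" by simp
  then show ?thesis by (simp add: power2_eq_square algebra_simps)
qed

lemma two_le_norm:
  assumes "j \<noteq> y"
  shows "(norm (G $ y) + norm (G $ j))\<^sup>2 \<le> 2 * (norm (G::real^'d^'k::finite))\<^sup>2"
proof -
  have "(\<Sum>i\<in>{y,j}. (norm (G $ i))\<^sup>2) \<le> (\<Sum>i\<in>UNIV. (norm (G $ i))\<^sup>2)"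
    by (rule sum_mono2) auto
  then have "(norm (G $ y))\<^sup>2 + (norm (G $ j))\<^sup>2 \<le> (norm G)\<^sup>2"
    using assms by (simp add: norm_sq_vec)
  moreover have "(norm (G $ y) + norm (G $ j))\<^sup>2 \<le> 2 * ((norm (G $ y))\<^sup>2 + (norm (G $ j))\<^sup>2)"
    by (rule sq2)
  ultimately show ?thesis by (smt (verit))
qed

lemma score_diff: "score (W + G) x k - score W x k = (G $ k) \<bullet> x"
  by (simp add: score_def inner_add_left)

lemma grad_bound:
  fixes W G :: "real^'d^'k::finite" and x :: "real^'d"
  assumes K: "CARD('k) \<ge> 2" and am: "\<forall>k. score W x k \<le> score W x ys"
    and sub: "\<forall>V. surr_loss (1/2) W x ys y V \<ge> surr_loss (1/2) W x ys y W + G \<bullet> (V - W)"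
  shows "(norm G)\<^sup>2 \<le> 4 * (norm x)\<^sup>2 * surr_loss (1/2) W x ys y W"
proof -
  let ?L = "surr_loss (1/2) W x ys y"
  have h: "?L (W + G) \<ge> ?L W + (norm G)\<^sup>2"
    using sub[rule_format, of "W + G"] by (simp add: power2_norm_eq_inner)
  show ?thesis
  proof (cases "y = ys \<and> mstar W x \<ge> 1/2")
    case True
    then have "\<And>V. ?L V = 0" by (simp add: surr_loss_def)
    with h have "(norm G)\<^sup>2 \<le> 0" by simp
    then show ?thesis using True by (simp add: surr_loss_def)
  next
    case c: False
    then have LV: "\<And>V. ?L V = max (1 - margin V x y) 0" unfolding surr_loss_def by auto
    have LW: "?L W \<ge> 1/2"
    proof (cases "y = ys")
      case True
      then have "margin W x y < 1/2" using c mstar_eq[OF K am] by simp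
      then show ?thesis using LV by simp
    next
      case False
      then show ?thesis using LV margin_other[OF am False] margin_star_nonneg[OF K am] by simp
    qed
    obtain j where j: "j \<noteq> y"
      "\<bar>Max {score (W + G) x k | k. k \<noteq> y} - Max {score W x k | k. k \<noteq> y}\<bar>
            \<le> \<bar>score (W + G) x j - score W x j\<bar>" using max_diff[OF K] by blast
    have md: "\<bar>margin (W + G) x y - margin W x y\<bar> \<le> \<bar>(G $ y) \<bullet> x\<bar> + \<bar>(G $ j) \<bullet> x\<bar>"
      using j(2) score_diff[of W G x y] score_diff[of W G x j] unfolding margin_def by linarith
    have cs: "\<bar>(G $ y) \<bullet> x\<bar> + \<bar>(G $ j) \<bullet> x\<bar> \<le> norm x * (norm (G $ y) + norm (G $ j))"
      using Cauchy_Schwarz_ineq2[of "G $ y" x] Cauchy_Schwarz_ineq2[of "G $ j" x]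
      by (simp add: algebra_simps)
    have "?L (W + G) - ?L W \<le> \<bar>margin (W + G) x y - margin W x y\<bar>"
      unfolding LV by linarith
    define n where "n = (norm G)\<^sup>2"
    define s where "s = norm (G $ y) + norm (G $ j)"
    have n1: "n \<le> norm x * s" using h md cs \<open>?L (W + G) - ?L W \<le> _\<close> unfolding n_def s_def by linarith
    have n0: "0 \<le> n" unfolding n_def by simp
    have s2: "s\<^sup>2 \<le> 2 * n" unfolding s_def n_def using two_le_norm[OF j(1)] .
    have "n\<^sup>2 \<le> (norm x * s)\<^sup>2" by (rule power_mono[OF n1 n0])
    also have "\<dots> = (norm x)\<^sup>2 * s\<^sup>2" by (simp add: power_mult_distrib)
    also have "\<dots> \<le> (norm x)\<^sup>2 * (2 * n)" by (rule mult_left_mono[OF s2]) simp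
    finally have nn: "n * n \<le> n * (2 * (norm x)\<^sup>2)" by (simp add: power2_eq_square algebra_simps)
    have "n \<le> 2 * (norm x)\<^sup>2"
    proof (cases "n = 0")
      case False
      then have "n > 0" using n0 by simp
      then show ?thesis using nn by simp
    qed simp
    also have "\<dots> \<le> 4 * (norm x)\<^sup>2 * ?L W"
      using mult_left_mono[OF LW, of "4 * (norm x)\<^sup>2"] by simp
    finally show ?thesis unfolding n_def .
  qed
qed

lemma part1:
  fixes W :: "real^'d^'k::finite" and x :: "real^'d" and S :: "'k set" and g :: real
  assumes K: "CARD('k) \<ge> 2" and am: "\<forall>k. score W x k \<le> score W x ys"
    and g0: "0 \<le> g" and g1: "g \<le> 1/2" and Sne: "S \<noteq> {}"
  shows "(\<Sum>yy\<in>UNIV. gapp_p g (surr_loss (1/2) W x ys ys W) ys S yy * (if yy \<noteq> y then 1 else 0))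
         \<le> max (2/3) (real (CARD('k) - 1) / real CARD('k)) * surr_loss (1/2) W x ys y W + g"
proof -
  define a where "a = surr_loss (1/2) W x ys ys W"
  define l where "l = surr_loss (1/2) W x ys y W"
  define p where "p = gapp_p g a ys S"
  define m where "m = margin W x ys"
  define Kr where "Kr = real CARD('k)"
  define c where "c = max (2/3) (real (CARD('k) - 1) / real CARD('k))"
  have Kr2: "Kr \<ge> 2" using K unfolding Kr_def by simp
  have c1: "c \<ge> 2/3" unfolding c_def by simp
  have c2: "c \<ge> (Kr - 1) / Kr" unfolding c_def Kr_def using K by (simp add: of_nat_diff)
  have m0: "m \<ge> 0" unfolding m_def using margin_star_nonneg[OF K am] .
  have ms: "mstar W x = m" unfolding m_def using mstar_eq[OF K am] .
  have a_eq: "a = (if m \<ge> 1/2 then 0 else 1 - m)"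
    unfolding a_def surr_loss_def ms by (simp add: m_def)
  have l_eq: "y = ys \<Longrightarrow> l = a" unfolding l_def a_def by simp
  have l_ge: "y \<noteq> ys \<Longrightarrow> l \<ge> 1 + m"
    unfolding l_def surr_loss_def using margin_other[OF am] m_def by fastforce
  have l0: "l \<ge> 0" unfolding l_def surr_loss_def by simp
  have a0: "a \<ge> 0" using a_eq m0 by simp
  have cardS: "card S > 0" using Sne by (simp add: card_gt_0_iff)
  have sum_eq: "(\<Sum>yy\<in>UNIV. p yy * (if yy \<noteq> y then 1 else 0)) = (\<Sum>yy\<in>UNIV. p yy) - p y"
  proof -
    have "(\<Sum>yy\<in>UNIV. p yy * (if yy \<noteq> y then 1 else 0))
        = (\<Sum>yy\<in>UNIV. p yy - (if yy = y then p yy else 0))"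
      by (rule sum.cong) auto
    also have "\<dots> = (\<Sum>yy\<in>UNIV. p yy) - (\<Sum>yy\<in>UNIV. (if yy = y then p yy else 0))"
      by (rule sum_subtractf)
    finally show ?thesis by simp
  qed
  have Sind: "(\<Sum>yy\<in>UNIV. (if yy \<in> S then 1 else 0 :: real)) = real (card S)"
    by (simp add: sum.If_cases)
  have total: "(\<Sum>yy\<in>UNIV. p yy) = 1"
  proof (cases "g \<le> a")
    case True
    then have "\<And>yy. p yy = (1 - a) * (if yy = ys then 1 else 0) + a / Kr"
      unfolding p_def gapp_p_def Kr_def by simp
    then show ?thesis using Kr2 unfolding Kr_def by (simp add: sum.distrib sum_distrib_left[symmetric])
  next
    case False
    then have "\<And>yy. p yy = (1 - g) * (if yy = ys then 1 else 0) + g / real (card S) * (if yy \<in> S then 1 else 0)"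
      unfolding p_def gapp_p_def by simp
    then have "(\<Sum>yy\<in>UNIV. p yy) = (1 - g) + g / real (card S) * (\<Sum>yy\<in>UNIV. (if yy \<in> S then 1 else 0 :: real))"
      by (simp add: sum.distrib sum_distrib_left[symmetric] sum_divide_distrib[symmetric])
    then show ?thesis using Sind cardS Sne by simp
  qed
  have LHS: "(\<Sum>yy\<in>UNIV. p yy * (if yy \<noteq> y then 1 else 0)) = 1 - p y"
    using sum_eq total by simp
  have main: "1 - p y \<le> c * l + g"
  proof (cases "g \<le> a")
    case ga: True
    then have py: "p y = (1 - a) * (if y = ys then 1 else 0) + a / Kr"
      unfolding p_def gapp_p_def Kr_def by simp
    show ?thesis
    proof (cases "y = ys")
      case True
      then have "1 - p y = a * ((Kr - 1) / Kr)" using py Kr2 by (simp add: field_simps)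
      also have "\<dots> \<le> a * c" by (rule mult_left_mono[OF c2 a0])
      finally show ?thesis using l_eq[OF True] g0 by (simp add: mult.commute)
    next
      case False
      then have py': "1 - p y = 1 - a / Kr" using py by simp
      have lg: "l \<ge> 1 + m" using l_ge[OF False] .
      show ?thesis
      proof (cases "m \<ge> 1/2")
        case True
        then have "a = 0" using a_eq by simp
        have "c * l \<ge> 2/3 * (3/2)"
          by (rule mult_mono) (use c1 lg True in auto)
        then show ?thesis using py' \<open>a = 0\<close> g0 by simp
      next
        case mF: False
        then have "a = 1 - m" using a_eq by simp
        have "c * l \<ge> (Kr - 1) / Kr * (1 + m)"
          by (rule mult_mono) (use c1 c2 lg Kr2 m0 in auto)
        moreover have "(Kr - 1) / Kr * (1 + m) \<ge> 1 - a / Kr"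
        proof -
          have "(Kr - 1) * (1 + m) \<ge> Kr - a"
            using \<open>a = 1 - m\<close> mult_right_mono[OF Kr2 m0] by (simp add: algebra_simps)
          then have "(Kr - a) / Kr \<le> ((Kr - 1) * (1 + m)) / Kr"
            by (rule divide_right_mono) (use Kr2 in auto)
          moreover have "1 - a / Kr = (Kr - a) / Kr" using Kr2 by (simp add: field_simps)
          ultimately show ?thesis by simp
        qed
        ultimately show ?thesis using py' g0 by simp
      qed
    qed
  next
    case ga: False
    then have py: "p y = (1 - g) * (if y = ys then 1 else 0) + g / real (card S) * (if y \<in> S then 1 else 0)"
      unfolding p_def gapp_p_def by simp
    have py2: "p y \<ge> (1 - g) * (if y = ys then 1 else 0)"
      using py g0 by simp
    show ?thesis
    proof (cases "y = ys")
      case True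
      have "c * l \<ge> 0" using c1 l0 by simp
      then show ?thesis using py2 True by simp
    next
      case False
      have "m \<ge> 1/2" using ga a_eq g1 by (auto split: if_splits)
      have lg: "l \<ge> 1 + m" using l_ge[OF False] .
      have "c * l \<ge> 2/3 * (3/2)"
        by (rule mult_mono) (use c1 lg \<open>m \<ge> 1/2\<close> in auto)
      then show ?thesis using py2 False g0 by simp
    qed
  qed
  show ?thesis using LHS main unfolding p_def a_def l_def c_def by simp
qed

theorem lemma3:
  fixes W :: "nat \<Rightarrow> real^'d^'k::finite"
    and x :: "nat \<Rightarrow> real^'d"
    and y :: "nat \<Rightarrow> 'k"
    and ys :: "nat \<Rightarrow> 'k"
    and E :: "('k \<times> 'k) set"
    and S :: "'k set"
    and \<gamma> :: real
    and t :: nat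
  assumes K2: "CARD('k) \<ge> 2"
    and graph: "feedback_graph E"
    and S: "min_dominating E S"
    and gam: "\<gamma> \<ge> 0"
    and argmax: "\<And>s. \<forall>k. score (W s) (x s) k \<le> score (W s) (x s) (ys s)"
    and t1: "t \<ge> 1"
  shows "(\<Sum>yy\<in>UNIV.
            gapp_p (gamma_t \<gamma> (Qset E) ys t)
                   (surr_loss (1/2) (W t) (x t) (ys t) (ys t) (W t))
                   (ys t) S yy * (if yy \<noteq> y t then 1 else 0))
         \<le> max (2/3) (real (CARD('k) - 1) / real CARD('k))
             * surr_loss (1/2) (W t) (x t) (ys t) (y t) (W t)
           + gamma_t \<gamma> (Qset E) ys t
         \<and> (\<forall>G. (\<forall>V. surr_loss (1/2) (W t) (x t) (ys t) (y t) V
                  \<ge> surr_loss (1/2) (W t) (x t) (ys t) (y t) (W t) + G \<bullet> (V - W t))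
         \<longrightarrow> (norm G)\<^sup>2 \<le> 4 * (norm (x t))\<^sup>2 * surr_loss (1/2) (W t) (x t) (ys t) (y t) (W t))"
proof -
  have g0: "0 \<le> gamma_t \<gamma> (Qset E) ys t" unfolding gamma_t_def using gam by simp
  have g1: "gamma_t \<gamma> (Qset E) ys t \<le> 1/2"
  proof (cases "ys t \<in> Qset E")
    case True then show ?thesis by (simp add: gamma_t_def)
  next
    case False
    then have "gamma_t \<gamma> (Qset E) ys t = min (1/2) (\<gamma> / sqrt (real (card {s \<in> {1..t}. ys s \<notin> Qset E})))"
      unfolding gamma_t_def by (simp only: if_False)
    then show ?thesis by (metis min.cobounded1)
  qed
  have Sne: "S \<noteq> {}" using S unfolding min_dominating_def dominating_def by blast
  show ?thesis
    using part1[OF K2 argmax[of t] g0 g1 Sne, of "y t"] grad_bound[OF K2 argmax[of t]] by blast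
qed

end
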